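(* Assume $\eta_1\le\frac{1}{4k(T_1+1)}$ and $0<r\le\frac{\eta_1}{200}$. With probability at least $1-4e^{-m/36}$ over the sample $S$, the following holds for every realization of the initialization: for all $0\le t\le T_1$ and all $i\in\mathcal{W}_0^+\cap\mathcal{A}^+$, (1) $o_1\cdot w_i^{(t)}\ge \frac{t\eta_1}{9}$; (2) $o_j\cdot w_i^{(t)}\le r$ for all $j\ne1$; and (3) $p_i^{(t)}(x)=o_1$ for every $x\in S_1^+$.
   Context: Fix $n\ge1$, $d\ge3$ and orthonormal $o_1,\dots,o_d\in\mathbb{R}^d$. Inputs are $x=(x[1],\dots,x[n])\in\mathbb{R}^{nd}$ with $x[j]\in\mathbb{R}^d$. The distribution $\mathcal{D}$ on $\mathbb{R}^{nd}\times\{\pm1\}$: $y$ uniform on $\{\pm1\}$; given $y=1$, an index $j_+$ uniform on $\{1,\dots,n\}$ is drawn, $x[j_+]=o_1$, and for $j\ne j_+$ independently $x[j]=o_{i_j}$, $i_j$ uniform on $\{3,\dots,d\}$; given $y=-1$, the same with $o_2$ instead of $o_1$. Network $N_{(W,a)}(x)=\sum_{i=1}^k a_i\max_j\sigma(w_i\cdot x[j])$, $\sigma(z)=\max\{0,z\}$, with $w_i$ the rows of $W\in\mathbb{R}^{k\times d}$. Loss $\ell(z)=\log(1+e^{-z})$. $S$ consists of $m$ i.i.d. samples from $\mathcal{D}$; $S_1$ is its first $\lceil m/2\rceil$ samples, $m_1=|S_1|$, $S_1^+=\{x:(x,1)\in S_1\}$, $S_1^-=\{x:(x,-1)\in S_1\}$,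 and $\mathcal{L}_1(W,a)=\frac{1}{m_1}\sum_{(x,y)\in S_1}\ell(yN_{(W,a)}(x))$. Initialization: each $w_i^{(0)}$ has norm $r$ (drawn uniformly on the radius-$r$ sphere) and each $a_i^{(0)}\in\{\pm1\}$. First-layer iterates: $W^{(t)}=W^{(t-1)}-\eta_1\nabla_W\mathcal{L}_1(W^{(t-1)},a^{(0)})$ for $t=1,\dots,T_1$, with $w_i^{(t)}$ the rows of $W^{(t)}$. Define $p_i^{(t)}(x)=x[j^*]$ where $j^*\in\arg\max_j w_i^{(t)}\cdot x[j]$, if $w_i^{(t)}\cdot x[j^*]>0$, and $p_i^{(t)}(x)=0$ otherwise; the gradient uses the convention $\frac{\partial}{\partial w_i}\max_j\sigma(w_i\cdot x[j])=p_i(x)$ (so $\max_j\sigma(w_i^{(t)}\cdot x[j])=w_i^{(t)}\cdot p_i^{(t)}(x)$). Sets: $\mathcal{A}^+=\{i:a_i^{(0)}=1\}$ and $\mathcal{W}_0^+=\{i:\arg\max_{l\in\{1,3,4,\dots,d\}}w_i^{(0)}\cdot o_l=1,\ w_i^{(0)}\cdot o_1>0\}$. *)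

theory Defs
  imports "HOL-Analysis.Analysis" "HOL-Probability.Probability" "HOL-Library.Monad_Syntax"
begin

text \<open>Conventions: the ambient space R^d is the type real^'d with d = CARD('d).
 The orthonormal vectors o_1..o_d are a function o :: nat => real^'d (indices 1..d).
 An input x = (x[1],...,x[n]) is a list of length n (list positions 0..n-1).
 First-layer weights W are given by their rows W i, i = 1..k; second layer a i, i = 1..k.\<close>

type_synonym 'd sample = "(real^'d) list \<times> real"

definition data_dist :: "nat \<Rightarrow> (nat \<Rightarrow> real^'d) \<Rightarrow> 'd sample pmf" where
  "data_dist n ov = do {
     y \<leftarrow> pmf_of_set {1, -1::real};
     jp \<leftarrow> pmf_of_set {0..<n};
     ids \<leftarrow> replicate_pmf n (pmf_of_set {3..CARD('d)});
     return_pmf (map (\<lambda>j. if j = jp then ov (if y = 1 then 1 else 2) else ov (ids ! j)) [0..<n], y)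
   }"

definition logloss :: "real \<Rightarrow> real" where
  "logloss z = ln (1 + exp (- z))"

definition network :: "nat \<Rightarrow> (nat \<Rightarrow> real^'d) \<Rightarrow> (nat \<Rightarrow> real) \<Rightarrow> (real^'d) list \<Rightarrow> real" where
  "network k W a x = (\<Sum>i = 1..k. a i * Max ((\<lambda>v. max 0 (W i \<bullet> v)) ` set x))"

definition patch :: "real^'d \<Rightarrow> (real^'d) list \<Rightarrow> real^'d" where
  "patch w x =
     (let M = Max ((\<lambda>v. w \<bullet> v) ` set x);
          js = (LEAST j. j < length x \<and> w \<bullet> (x ! j) = M)
      in if M > 0 then x ! js else 0)"

definition grad_row :: "nat \<Rightarrow> 'd sample list \<Rightarrow> (nat \<Rightarrow> real^'d) \<Rightarrow> (nat \<Rightarrow> real) \<Rightarrow> nat \<Rightarrow> real^'d" where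
  "grad_row k S1 W a i =
     (1 / real (length S1)) *\<^sub>R
       sum_list (map (\<lambda>(x, y). (deriv logloss (y * network k W a x) * y * a i) *\<^sub>R patch (W i) x) S1)"

primrec gd_iter :: "nat \<Rightarrow> real \<Rightarrow> 'd sample list \<Rightarrow> (nat \<Rightarrow> real) \<Rightarrow> (nat \<Rightarrow> real^'d) \<Rightarrow> nat \<Rightarrow> (nat \<Rightarrow> real^'d)" where
  "gd_iter k eta S1 a W0 0 = W0"
| "gd_iter k eta S1 a W0 (Suc t) =
     (\<lambda>i. gd_iter k eta S1 a W0 t i - eta *\<^sub>R grad_row k S1 (gd_iter k eta S1 a W0 t) a i)"

definition first_half :: "'a list \<Rightarrow> 'a list" where
  "first_half S = take (nat \<lceil>real (length S) / 2\<rceil>) S"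

definition in_W0plus :: "(nat \<Rightarrow> real^'d) \<Rightarrow> real^'d \<Rightarrow> bool" where
  "in_W0plus ov w \<longleftrightarrow> w \<bullet> ov 1 > 0 \<and> (\<forall>l \<in> {3..CARD('d)}. w \<bullet> ov l < w \<bullet> ov 1)"

end

theory Submission
  imports Defs
begin

lemma deriv_logloss: "deriv logloss z = - 1 / (1 + exp z)"
proof -
  have "(logloss has_real_derivative (- exp (-z) / (1 + exp (-z)))) (at z)"
    unfolding logloss_def[abs_def]
    by (rule derivative_eq_intros refl | simp add: add_pos_pos)+
  then have "deriv logloss z = - exp (-z) / (1 + exp (-z))" by (rule DERIV_imp_deriv)
  also have "\<dots> = - 1 / (1 + exp z)"
    by (simp add: exp_minus field_simps)
  finally show ?thesis .
qed

lemma exp_quarter: "exp (1/4::real) \<le> 2"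
proof -
  have "1/4 \<le> ln (2::real)" using ln2_ge_two_thirds by simp
  then show ?thesis by (metis exp_le_cancel_iff exp_ln zero_less_numeral)
qed

lemma patch_pos:
  assumes "u \<in> set x" "w \<bullet> u > 0" "\<forall>v\<in>set x. v \<noteq> u \<longrightarrow> w \<bullet> v < w \<bullet> u"
  shows "patch w x = u"
proof -
  have fin: "finite ((\<lambda>v. w \<bullet> v) ` set x)" by simp
  have M: "Max ((\<lambda>v. w \<bullet> v) ` set x) = w \<bullet> u"
    using assms by (intro Max_eqI) force+
  obtain j0 where j0: "j0 < length x" "x ! j0 = u" using assms(1) by (metis in_set_conv_nth)
  define js where "js = (LEAST j. j < length x \<and> w \<bullet> (x ! j) = w \<bullet> u)"
  have "js < length x \<and> w \<bullet> (x ! js) = w \<bullet> u"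
    unfolding js_def by (rule LeastI[of _ j0]) (use j0 in auto)
  then have "x ! js = u" using assms(3) by (metis less_irrefl nth_mem)
  then show ?thesis unfolding patch_def Let_def M js_def[symmetric] using assms(2) by simp
qed

lemma patch_mem:
  assumes "x \<noteq> []"
  shows "patch w x \<in> set x \<or> patch w x = 0"
proof -
  define M where "M = Max ((\<lambda>v. w \<bullet> v) ` set x)"
  have "M \<in> (\<lambda>v. w \<bullet> v) ` set x" unfolding M_def using assms by (intro Max_in) auto
  then obtain j0 where j0: "j0 < length x" "w \<bullet> x ! j0 = M" by (metis imageE in_set_conv_nth)
  define js where "js = (LEAST j. j < length x \<and> w \<bullet> (x ! j) = M)"
  have "js < length x"
    unfolding js_def by (rule LeastI2[of _ j0]) (use j0 in auto)
  then show ?thesis unfolding patch_def Let_def M_def[symmetric] js_def[symmetric] by auto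
qed

definition gfac :: "real \<Rightarrow> real" where "gfac z = 1 / (1 + exp z)"

lemma gfac_pos: "gfac z > 0" unfolding gfac_def by (simp add: add_pos_pos)
lemma gfac_le1: "gfac z \<le> 1" unfolding gfac_def by (simp add: add_pos_pos)

lemma grad_sum:
  "grad_row k S1 W a i = (1 / real (length S1)) *\<^sub>R
     (\<Sum>q<length S1. (- gfac (snd (S1!q) * network k W a (fst (S1!q))) * snd (S1!q) * a i) *\<^sub>R patch (W i) (fst (S1!q)))"
  unfolding grad_row_def sum_list_sum_nth deriv_logloss gfac_def
  by (simp add: case_prod_beta atLeast0LessThan)

lemma comp:
  "u \<bullet> (W i - eta *\<^sub>R grad_row k S1 W a i) = u \<bullet> W i + eta / real (length S1) *
     (\<Sum>q<length S1. gfac (snd (S1!q) * network k W a (fst (S1!q))) * snd (S1!q) * a i * (u \<bullet> patch (W i) (fst (S1!q))))"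
  unfolding grad_sum inner_diff_right inner_scaleR_right inner_sum_right
  by (simp add: sum_negf sum_distrib_left field_simps)

lemma norm_step:
  assumes "\<forall>z\<in>set S1. snd z \<in> {1,-1} \<and> fst z \<noteq> [] \<and> (\<forall>v\<in>set (fst z). norm v \<le> 1)"
    and "\<bar>a i\<bar> = 1" "eta \<ge> 0"
  shows "norm (W i - eta *\<^sub>R grad_row k S1 W a i) \<le> norm (W i) + eta"
proof -
  let ?f = "\<lambda>q. (- gfac (snd (S1!q) * network k W a (fst (S1!q))) * snd (S1!q) * a i) *\<^sub>R patch (W i) (fst (S1!q))"
  have b: "norm (?f q) \<le> 1" if q: "q < length S1" for q
  proof -
    have z: "S1 ! q \<in> set S1" using q by simp
    have y: "\<bar>snd (S1!q)\<bar> = 1" using assms(1) z by auto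
    have p: "norm (patch (W i) (fst (S1!q))) \<le> 1"
      using patch_mem[of "fst (S1!q)" "W i"] assms(1) z by auto
    have "norm (?f q) = gfac (snd (S1!q) * network k W a (fst (S1!q))) * norm (patch (W i) (fst (S1!q)))"
      using y assms(2) gfac_pos[of "snd (S1!q) * network k W a (fst (S1!q))"] by (simp add: abs_mult)
    also have "\<dots> \<le> 1 * 1" using p gfac_le1 gfac_pos by (intro mult_mono) (auto intro: less_imp_le)
    finally show ?thesis by simp
  qed
  have "norm (\<Sum>q<length S1. ?f q) \<le> (\<Sum>q<length S1. norm (?f q))" by (rule norm_sum)
  also have "\<dots> \<le> (\<Sum>q<length S1. 1)" using b by (intro sum_mono) auto
  finally have s: "norm (\<Sum>q<length S1. ?f q) \<le> real (length S1)" by simp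
  have "norm (grad_row k S1 W a i) \<le> 1"
  proof (cases "length S1 = 0")
    case True then show ?thesis unfolding grad_sum by simp
  next
    case False
    then show ?thesis unfolding grad_sum using s by (simp add: field_simps)
  qed
  then have "norm (eta *\<^sub>R grad_row k S1 W a i) \<le> eta" using assms(3)
    by (simp add: mult_left_le)
  then show ?thesis by (metis add_left_mono norm_triangle_ineq4 order_trans)
qed

lemma net_bound:
  assumes "x \<noteq> []" "\<forall>v\<in>set x. norm v \<le> 1" "\<forall>i\<in>{1..k}. a i \<in> {1,-1}"
  shows "network k W a x \<le> (\<Sum>i=1..k. norm (W i))"
  unfolding network_def
proof (rule sum_mono)
  fix i assume i: "i \<in> {1..k}"
  let ?M = "Max ((\<lambda>v. max 0 (W i \<bullet> v)) ` set x)"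
  have fin: "finite ((\<lambda>v. max 0 (W i \<bullet> v)) ` set x)" "(\<lambda>v. max 0 (W i \<bullet> v)) ` set x \<noteq> {}"
    using assms(1) by auto
  have M0: "?M \<ge> 0"
  proof -
    obtain v where "v \<in> set x" using assms(1) by (cases x) auto
    then have "max 0 (W i \<bullet> v) \<le> ?M" using fin by (intro Max_ge) auto
    then show ?thesis by linarith
  qed
  have Mle: "?M \<le> norm (W i)"
  proof (subst Max_le_iff[OF fin], safe)
    fix v assume v: "v \<in> set x"
    have "W i \<bullet> v \<le> norm (W i) * norm v" by (rule norm_cauchy_schwarz)
    also have "\<dots> \<le> norm (W i) * 1" using assms(2) v by (intro mult_left_mono) auto
    finally show "max 0 (W i \<bullet> v) \<le> norm (W i)" by simp
  qed
  have "a i = 1 \<or> a i = -1" using assms(3) i by auto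
  then have "a i * ?M \<le> ?M" using M0 by auto
  then show "a i * ?M \<le> norm (W i)" using Mle by linarith
qed

definition valid :: "(nat \<Rightarrow> real^'d) \<Rightarrow> 'd sample list \<Rightarrow> bool" where
  "valid ov S1 \<longleftrightarrow> (\<forall>z\<in>set S1. snd z \<in> {1,-1} \<and> fst z \<noteq> [] \<and>
      (snd z = 1 \<longrightarrow> ov 1 \<in> set (fst z) \<and> (\<forall>v\<in>set (fst z). \<exists>l\<in>{1} \<union> {3..CARD('d)}. v = ov l)) \<and>
      (snd z = -1 \<longrightarrow> (\<forall>v\<in>set (fst z). \<exists>l\<in>{2..CARD('d)}. v = ov l)))"

definition orthn :: "(nat \<Rightarrow> real^'d) \<Rightarrow> bool" where
  "orthn ov \<longleftrightarrow> (\<forall>i\<in>{1..CARD('d)}. \<forall>j\<in>{1..CARD('d)}. ov i \<bullet> ov j = (if i = j then 1 else 0))"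

lemma orth_norm: fixes ov :: "nat \<Rightarrow> real^'d" shows "orthn ov \<Longrightarrow> l \<in> {1..CARD('d)} \<Longrightarrow> norm (ov l :: real^'d) = 1"
  unfolding orthn_def by (metis norm_eq_sqrt_inner real_sqrt_one)

lemma valid_norm:
  fixes ov :: "nat \<Rightarrow> real^'d"
  assumes "orthn ov" "valid ov S1" "z \<in> set S1" "v \<in> set (fst z)"
  shows "norm v \<le> 1"
proof -
  have V: "snd z = 1 \<or> snd z = -1" "snd z = 1 \<longrightarrow> (\<forall>v\<in>set (fst z). \<exists>l\<in>{1} \<union> {3..CARD('d)}. v = ov l)"
     "snd z = -1 \<longrightarrow> (\<forall>v\<in>set (fst z). \<exists>l\<in>{2..CARD('d)}. v = ov l)"
    using assms(2,3) unfolding valid_def by auto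
  have "\<exists>l\<in>{1..CARD('d)}. v = ov l"
  proof (cases "snd z = 1")
    case True
    then obtain l where "l \<in> {1} \<union> {3..CARD('d)}" "v = ov l" using V(2) assms(4) by blast
    then show ?thesis by (intro bexI[of _ l]) auto
  next
    case False
    then obtain l where "l \<in> {2..CARD('d)}" "v = ov l" using V(1,3) assms(4) by blast
    then show ?thesis by (intro bexI[of _ l]) auto
  qed
  then obtain l where "l \<in> {1..CARD('d)}" "v = ov l" by blast
  then show ?thesis using orth_norm[OF assms(1)] by simp
qed

definition goodw :: "(nat \<Rightarrow> real^'d) \<Rightarrow> real^'d \<Rightarrow> bool" where
  "goodw ov w \<longleftrightarrow> w \<bullet> ov 1 > 0 \<and> (\<forall>l\<in>{3..CARD('d)}. w \<bullet> ov l < w \<bullet> ov 1)"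

lemma patch_good:
  fixes ov :: "nat \<Rightarrow> real^'d"
  assumes "goodw ov w" "valid ov S1" "z \<in> set S1" "snd z = 1"
  shows "patch w (fst z) = ov 1"
proof (rule patch_pos)
  show "ov 1 \<in> set (fst z)" using assms(2-4) unfolding valid_def by auto
  show "0 < w \<bullet> ov 1" using assms(1) unfolding goodw_def by auto
  show "\<forall>v\<in>set (fst z). v \<noteq> ov 1 \<longrightarrow> w \<bullet> v < w \<bullet> ov 1"
  proof safe
    fix v assume v: "v \<in> set (fst z)" "v \<noteq> ov 1"
    then obtain l where "l \<in> {1} \<union> {3..CARD('d)}" "v = ov l"
      using assms(2-4) unfolding valid_def by fastforce
    with v assms(1) show "w \<bullet> v < w \<bullet> ov 1" unfolding goodw_def by auto
  qed
qed

lemma term_1: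
  fixes ov :: "nat \<Rightarrow> real^'d"
  assumes "orthn ov" "goodw ov w" "valid ov S1" "z \<in> set S1" "c > 0" and d3: "CARD('d) \<ge> 3"
  shows "c * snd z * (ov 1 \<bullet> patch w (fst z)) = (if snd z = 1 then c else 0)"
proof (cases "snd z = 1")
  case True
  then have "patch w (fst z) = ov 1" using patch_good assms by blast
  moreover have "ov 1 \<bullet> ov 1 = 1" using assms(1) d3 unfolding orthn_def by auto
  ultimately show ?thesis using True by simp
next
  case False
  then have y: "snd z = -1" using assms(3,4) unfolding valid_def by auto
  have ne: "fst z \<noteq> []" using assms(3,4) unfolding valid_def by auto
  have "ov 1 \<bullet> patch w (fst z) = 0"
  proof (cases "patch w (fst z) = 0")
    case False
    then have "patch w (fst z) \<in> set (fst z)" using patch_mem[OF ne] by auto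
    then obtain l where "l \<in> {2..CARD('d)}" "patch w (fst z) = ov l"
      using assms(3,4) y unfolding valid_def by fastforce
    then show ?thesis using assms(1) d3 unfolding orthn_def by auto
  qed simp
  then show ?thesis using False by simp
qed

lemma term_j:
  fixes ov :: "nat \<Rightarrow> real^'d"
  assumes "orthn ov" "goodw ov w" "valid ov S1" "z \<in> set S1" "c > 0" and d3: "CARD('d) \<ge> 3"
    and j: "j \<in> {2..CARD('d)}"
  shows "c * snd z * (ov j \<bullet> patch w (fst z)) \<le> 0"
proof (cases "snd z = 1")
  case True
  then have "patch w (fst z) = ov 1" using patch_good assms by blast
  moreover have "ov j \<bullet> ov 1 = 0" using assms(1) d3 j unfolding orthn_def by auto
  ultimately show ?thesis by simp
next
  case False
  then have y: "snd z = -1" using assms(3,4) unfolding valid_def by auto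
  have ne: "fst z \<noteq> []" using assms(3,4) unfolding valid_def by auto
  have "ov j \<bullet> patch w (fst z) \<ge> 0"
  proof (cases "patch w (fst z) = 0")
    case False
    then have "patch w (fst z) \<in> set (fst z)" using patch_mem[OF ne] by auto
    then obtain l where "l \<in> {2..CARD('d)}" "patch w (fst z) = ov l"
      using assms(3,4) y unfolding valid_def by fastforce
    then show ?thesis using assms(1) d3 j unfolding orthn_def by auto
  qed simp
  then show ?thesis using y assms(5) by simp
qed

lemma inv_struct:
  fixes ov :: "nat \<Rightarrow> real^'d"
  assumes orth: "orthn ov" and val: "valid ov S1" and d3: "CARD('d) \<ge> 3"
    and ai: "a i = 1" and g0: "goodw ov (W0 i)" and eta: "eta \<ge> 0"
  shows "ov 1 \<bullet> gd_iter k eta S1 a W0 t i \<ge> ov 1 \<bullet> W0 i \<and>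
         (\<forall>j\<in>{2..CARD('d)}. ov j \<bullet> gd_iter k eta S1 a W0 t i \<le> ov j \<bullet> W0 i)"
proof (induction t)
  case 0
  then show ?case by simp
next
  case (Suc t)
  let ?W = "gd_iter k eta S1 a W0 t"
  have gw: "goodw ov (?W i)"
  proof -
    have "?W i \<bullet> ov 1 > 0" using Suc g0 unfolding goodw_def by (simp add: inner_commute)
    moreover have "?W i \<bullet> ov l < ?W i \<bullet> ov 1" if l: "l \<in> {3..CARD('d)}" for l
    proof -
      have "ov l \<bullet> ?W i \<le> ov l \<bullet> W0 i" using Suc l by auto
      moreover have "W0 i \<bullet> ov l < W0 i \<bullet> ov 1" using g0 l unfolding goodw_def by auto
      ultimately show ?thesis using Suc by (simp add: inner_commute)
    qed
    ultimately show ?thesis unfolding goodw_def by auto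
  qed
  let ?g = "\<lambda>q. gfac (snd (S1!q) * network k ?W a (fst (S1!q)))"
  have c: "0 \<le> eta / real (length S1)" using eta by simp
  have s1: "0 \<le> (\<Sum>q<length S1. ?g q * snd (S1!q) * a i * (ov 1 \<bullet> patch (?W i) (fst (S1!q))))"
  proof (rule sum_nonneg)
    fix q assume "q \<in> {..<length S1}"
    then have z: "S1 ! q \<in> set S1" by simp
    show "0 \<le> ?g q * snd (S1!q) * a i * (ov 1 \<bullet> patch (?W i) (fst (S1!q)))"
    proof -
      have e: "?g q * snd (S1!q) * (ov 1 \<bullet> patch (?W i) (fst (S1!q))) = (if snd (S1!q) = 1 then ?g q else 0)"
        by (rule term_1[OF orth gw val z gfac_pos d3])
      show ?thesis using e ai by (simp add: less_imp_le[OF gfac_pos])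
    qed
  qed
  have sj: "(\<Sum>q<length S1. ?g q * snd (S1!q) * a i * (ov j \<bullet> patch (?W i) (fst (S1!q)))) \<le> 0"
    if j: "j \<in> {2..CARD('d)}" for j
  proof (rule sum_nonpos)
    fix q assume "q \<in> {..<length S1}"
    then have z: "S1 ! q \<in> set S1" by simp
    show "?g q * snd (S1!q) * a i * (ov j \<bullet> patch (?W i) (fst (S1!q))) \<le> 0"
      using term_j[OF orth gw val z gfac_pos d3 j] ai by simp
  qed
  have "ov 1 \<bullet> gd_iter k eta S1 a W0 (Suc t) i \<ge> ov 1 \<bullet> ?W i"
  proof -
    have eq: "ov 1 \<bullet> gd_iter k eta S1 a W0 (Suc t) i = ov 1 \<bullet> ?W i + eta / real (length S1) *
     (\<Sum>q<length S1. ?g q * snd (S1!q) * a i * (ov 1 \<bullet> patch (?W i) (fst (S1!q))))"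
      unfolding gd_iter.simps by (rule comp)
    have "0 \<le> eta / real (length S1) *
     (\<Sum>q<length S1. ?g q * snd (S1!q) * a i * (ov 1 \<bullet> patch (?W i) (fst (S1!q))))"
      using c s1 by (rule mult_nonneg_nonneg)
    with eq show ?thesis by linarith
  qed
  moreover have "ov j \<bullet> gd_iter k eta S1 a W0 (Suc t) i \<le> ov j \<bullet> ?W i"
    if j: "j \<in> {2..CARD('d)}" for j
  proof -
    have eq: "ov j \<bullet> gd_iter k eta S1 a W0 (Suc t) i = ov j \<bullet> ?W i + eta / real (length S1) *
     (\<Sum>q<length S1. ?g q * snd (S1!q) * a i * (ov j \<bullet> patch (?W i) (fst (S1!q))))"
      unfolding gd_iter.simps by (rule comp)
    have "eta / real (length S1) *
     (\<Sum>q<length S1. ?g q * snd (S1!q) * a i * (ov j \<bullet> patch (?W i) (fst (S1!q)))) \<le> 0"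
      using c sj[OF j] by (rule mult_nonneg_nonpos)
    with eq show ?thesis by linarith
  qed
  ultimately show ?case using Suc by force
qed

lemma norm_iter:
  fixes ov :: "nat \<Rightarrow> real^'d"
  assumes orth: "orthn ov" and val: "valid ov S1"
    and a: "\<forall>i\<in>{1..k}. a i \<in> {1,-1}" and eta: "eta \<ge> 0"
    and n0: "\<forall>i\<in>{1..k}. norm (W0 i) \<le> r"
  shows "\<forall>i\<in>{1..k}. norm (gd_iter k eta S1 a W0 t i) \<le> r + real t * eta"
proof (induction t)
  case 0
  then show ?case using n0 by simp
next
  case (Suc t)
  have V: "\<forall>z\<in>set S1. snd z \<in> {1,-1} \<and> fst z \<noteq> [] \<and> (\<forall>v\<in>set (fst z). norm v \<le> 1)"
    using val valid_norm[OF orth val] unfolding valid_def by blast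
  show ?case
  proof
    fix i assume i: "i \<in> {1..k}"
    have "a i = 1 \<or> a i = -1" using a i by auto
    then have "\<bar>a i\<bar> = 1" by auto
    then have h1: "norm (gd_iter k eta S1 a W0 (Suc t) i) \<le> norm (gd_iter k eta S1 a W0 t i) + eta"
      unfolding gd_iter.simps by (rule norm_step[OF V _ eta])
    have h2: "norm (gd_iter k eta S1 a W0 t i) \<le> r + real t * eta" using Suc.IH i by blast
    have h3: "r + real (Suc t) * eta = r + real t * eta + eta" by (simp add: algebra_simps)
    show "norm (gd_iter k eta S1 a W0 (Suc t) i) \<le> r + real (Suc t) * eta"
      using h1 h2 h3 by linarith
  qed
qed

lemma gfac_ge: "z \<le> 1/4 \<Longrightarrow> gfac z \<ge> 1/3"
proof -
  assume z: "z \<le> 1/4"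
  have "exp z \<le> 2" using exp_quarter z by (meson exp_le_cancel_iff order_trans)
  moreover have p: "1 + exp z > 0" by (simp add: add_pos_pos)
  ultimately show ?thesis unfolding gfac_def by (simp add: le_divide_eq)
qed

lemma quant:
  fixes ov :: "nat \<Rightarrow> real^'d"
  assumes orth: "orthn ov" and val: "valid ov S1" and d3: "CARD('d) \<ge> 3"
    and ai: "a i = 1" and g0: "goodw ov (W0 i)" and a: "\<forall>i\<in>{1..k}. a i \<in> {1,-1}"
    and n0: "\<forall>i\<in>{1..k}. norm (W0 i) \<le> r" and eta: "eta \<ge> 0" and reta: "r \<le> eta"
    and keta: "real k * (real T1 + 1) * eta \<le> 1/4" and L: "length S1 > 0"
    and cnt: "real (length S1) \<le> 3 * real (card {q \<in> {..<length S1}. snd (S1!q) = 1})"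
  shows "t \<le> T1 \<Longrightarrow> ov 1 \<bullet> gd_iter k eta S1 a W0 t i \<ge> ov 1 \<bullet> W0 i + real t * eta / 9"
proof (induction t)
  case 0
  then show ?case by simp
next
  case (Suc t)
  let ?W = "gd_iter k eta S1 a W0 t"
  have tT: "t < T1" using Suc by simp
  have IH: "ov 1 \<bullet> ?W i \<ge> ov 1 \<bullet> W0 i + real t * eta / 9" using Suc tT by simp
  have st: "ov 1 \<bullet> ?W i \<ge> ov 1 \<bullet> W0 i \<and> (\<forall>j\<in>{2..CARD('d)}. ov j \<bullet> ?W i \<le> ov j \<bullet> W0 i)"
    by (rule inv_struct) (rule orth val d3 ai g0 eta)+
  have gw: "goodw ov (?W i)"
  proof -
    have "?W i \<bullet> ov 1 > 0" using st g0 unfolding goodw_def by (simp add: inner_commute)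
    moreover have "?W i \<bullet> ov l < ?W i \<bullet> ov 1" if l: "l \<in> {3..CARD('d)}" for l
    proof -
      have "ov l \<bullet> ?W i \<le> ov l \<bullet> W0 i" using st l by auto
      moreover have "W0 i \<bullet> ov l < W0 i \<bullet> ov 1" using g0 l unfolding goodw_def by auto
      ultimately show ?thesis using st by (simp add: inner_commute)
    qed
    ultimately show ?thesis unfolding goodw_def by auto
  qed
  have nrm: "\<forall>i\<in>{1..k}. norm (?W i) \<le> r + real t * eta"
    by (rule norm_iter[OF orth val a eta n0])
  have sumn: "(\<Sum>i=1..k. norm (?W i)) \<le> 1/4"
  proof -
    have "(\<Sum>i=1..k. norm (?W i)) \<le> of_nat (card {1..k}) * ((real T1 + 1) * eta)"
    proof (rule sum_bounded_above)
      fix i' assume "i' \<in> {1..k}"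
      then have "norm (?W i') \<le> r + real t * eta" using nrm by blast
      also have "\<dots> \<le> (real T1 + 1) * eta"
      proof -
        have "real t * eta \<le> real T1 * eta" using tT eta by (intro mult_right_mono) auto
        then show ?thesis using reta by (simp add: algebra_simps)
      qed
      finally show "norm (?W i') \<le> (real T1 + 1) * eta" .
    qed
    then show ?thesis using keta by (simp add: mult.assoc)
  qed
  let ?g = "\<lambda>q. gfac (snd (S1!q) * network k ?W a (fst (S1!q)))"
  let ?P = "\<lambda>q. snd (S1!q) = 1"
  have tb: "?g q * snd (S1!q) * a i * (ov 1 \<bullet> patch (?W i) (fst (S1!q))) \<ge> (if ?P q then 1/3 else 0)"
    if q: "q \<in> {..<length S1}" for q
  proof -
    have z: "S1 ! q \<in> set S1" using q by simp
    have e: "?g q * snd (S1!q) * (ov 1 \<bullet> patch (?W i) (fst (S1!q))) = (if ?P q then ?g q else 0)"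
      by (rule term_1[OF orth gw val z gfac_pos d3])
    have e': "?g q * snd (S1!q) * a i * (ov 1 \<bullet> patch (?W i) (fst (S1!q))) = (if ?P q then ?g q else 0)"
      unfolding ai mult_1_right by (rule e)
    have gq: "?g q \<ge> 1/3" if True: "?P q"
    proof -
      have ne: "fst (S1!q) \<noteq> []" using val z unfolding valid_def by auto
      have nv: "\<forall>v\<in>set (fst (S1!q)). norm v \<le> 1" using valid_norm[OF orth val z] by blast
      have "network k ?W a (fst (S1!q)) \<le> 1/4"
        using net_bound[OF ne nv a, of ?W] sumn by linarith
      then show "?g q \<ge> 1/3" using True gfac_ge by simp
    qed
    show ?thesis unfolding e' using gq by auto
  qed
  have "(\<Sum>q<length S1. ?g q * snd (S1!q) * a i * (ov 1 \<bullet> patch (?W i) (fst (S1!q))))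
        \<ge> (\<Sum>q<length S1. if ?P q then 1/3 else 0)"
    using tb by (intro sum_mono) auto
  also have "(\<Sum>q<length S1. if ?P q then 1/3 else (0::real)) = (\<Sum>q\<in>{q \<in> {..<length S1}. ?P q}. 1/3)"
    by (rule sum.inter_filter[symmetric]) simp
  also have "\<dots> = real (card {q \<in> {..<length S1}. ?P q}) / 3" by simp
  finally have S: "(\<Sum>q<length S1. ?g q * snd (S1!q) * a i * (ov 1 \<bullet> patch (?W i) (fst (S1!q))))
        \<ge> real (length S1) / 9" using cnt by linarith
  have eq: "ov 1 \<bullet> gd_iter k eta S1 a W0 (Suc t) i = ov 1 \<bullet> ?W i + eta / real (length S1) *
     (\<Sum>q<length S1. ?g q * snd (S1!q) * a i * (ov 1 \<bullet> patch (?W i) (fst (S1!q))))"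
    unfolding gd_iter.simps by (rule comp)
  have "eta / real (length S1) * (real (length S1) / 9) \<le> eta / real (length S1) *
     (\<Sum>q<length S1. ?g q * snd (S1!q) * a i * (ov 1 \<bullet> patch (?W i) (fst (S1!q))))"
    using S eta by (intro mult_left_mono) auto
  moreover have "eta / real (length S1) * (real (length S1) / 9) = eta / 9" using L by simp
  moreover have "real (Suc t) * eta / 9 = real t * eta / 9 + eta / 9" by (simp add: algebra_simps)
  ultimately show ?case using eq IH by linarith
qed

lemma rep_take: "j \<le> m \<Longrightarrow> map_pmf (take j) (replicate_pmf m p) = replicate_pmf j p"
proof (induction m arbitrary: j)
  case 0 then show ?case by simp
next
  case (Suc m)
  show ?case
  proof (cases j)
    case 0 then show ?thesis by simp
  next
    case (Suc j')
    with Suc.prems have j': "j' \<le> m" by simp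
    have "map_pmf (take j) (replicate_pmf (Suc m) p) =
          bind_pmf p (\<lambda>x. map_pmf (\<lambda>xs. x # xs) (map_pmf (take j') (replicate_pmf m p)))"
      unfolding Suc by (simp add: map_pmf_def[symmetric] map_bind_pmf pmf.map_comp o_def)
    also have "\<dots> = replicate_pmf j p" using Suc.IH[OF j'] Suc by (simp add: map_pmf_def)
    finally show ?thesis .
  qed
qed

lemma rep_map: "map_pmf (map f) (replicate_pmf m p) = replicate_pmf m (map_pmf f p)"
proof (induction m)
  case 0 then show ?case by simp
next
  case (Suc m)
  have "map_pmf (map f) (replicate_pmf (Suc m) p) =
        bind_pmf p (\<lambda>x. map_pmf (\<lambda>xs. f x # xs) (map_pmf (map f) (replicate_pmf m p)))"
    by (simp add: map_pmf_def[symmetric] map_bind_pmf pmf.map_comp o_def)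
  also have "\<dots> = bind_pmf p (\<lambda>x. map_pmf (\<lambda>xs. f x # xs) (replicate_pmf m (map_pmf f p)))"
    by (simp only: Suc.IH)
  also have "\<dots> = replicate_pmf (Suc m) (map_pmf f p)"
    unfolding replicate_pmf.simps(2)[of m "map_pmf f p"] bind_map_pmf by (simp add: map_pmf_def)
  finally show ?case .
qed

lemma label_dist: "map_pmf (\<lambda>z. snd z = (1::real)) (data_dist n ov) = bernoulli_pmf (1/2)"
proof -
  have "map_pmf (\<lambda>z. snd z = (1::real)) (data_dist n ov) =
        map_pmf (\<lambda>y. y = 1) (pmf_of_set {1, -1::real})"
    unfolding data_dist_def by (simp add: map_pmf_def bind_assoc_pmf bind_return_pmf)
  also have "\<dots> = bernoulli_pmf (1/2)"
  proof (rule pmf_eqI)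
    fix b :: bool
    have "pmf (map_pmf (\<lambda>y. y = 1) (pmf_of_set {1, -1::real})) b =
          measure (pmf_of_set {1, -1::real}) ((\<lambda>y. y = 1) -` {b})" by (rule pmf_map)
    also have "\<dots> = 1/2"
    proof -
      have e: "{1, -1::real} \<inter> ((\<lambda>y. y = 1) -` {b}) = (if b then {1} else {-1})" by auto
      show ?thesis by (subst measure_pmf_of_set) (auto simp: e)
    qed
    finally show "pmf (map_pmf (\<lambda>y. y = 1) (pmf_of_set {1, -1::real})) b = pmf (bernoulli_pmf (1/2)) b"
      by simp
  qed
  finally show ?thesis .
qed

lemma count_dist:
  assumes "m1 \<le> m"
  shows "map_pmf (\<lambda>S. length (filter (\<lambda>z. snd z = (1::real)) (take m1 S))) (replicate_pmf m (data_dist n ov))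
     = binomial_pmf m1 (1/2)"
proof -
  let ?P = "\<lambda>z. snd z = (1::real)"
  have fe: "(\<lambda>S. length (filter ?P (take m1 S))) = (length \<circ> filter id) \<circ> (map ?P \<circ> take m1)"
    by (auto simp: filter_map o_def)
  have "map_pmf (\<lambda>S. length (filter ?P (take m1 S))) (replicate_pmf m (data_dist n ov)) =
     map_pmf (length \<circ> filter id) (map_pmf (map ?P) (map_pmf (take m1) (replicate_pmf m (data_dist n ov))))"
    unfolding fe pmf.map_comp by (rule refl)
  also have "\<dots> = map_pmf (length \<circ> filter id) (replicate_pmf m1 (bernoulli_pmf (1/2)))"
    by (simp only: rep_take[OF assms] rep_map label_dist)
  also have "\<dots> = binomial_pmf m1 (1/2)" by (rule binomial_pmf_altdef[symmetric]) auto
  finally show ?thesis .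
qed

lemma tail:
  assumes "m1 > 0"
  shows "measure (binomial_pmf m1 (1/2)) {x. real m1 \<le> 3 * real x} \<ge> 1 - exp (- real m1 / 18)"
proof -
  let ?M = "binomial_pmf m1 (1/2)"
  have le: "measure ?M {x. real x \<le> real m1 * (1/2) - real m1 / 6} \<le> exp (-2 * (real m1 / 6)\<^sup>2 / real m1)"
    by (rule binomial_distribution.prob_le) (use assms in \<open>auto simp: binomial_distribution_def\<close>)
  have ex: "exp (-2 * (real m1 / 6)\<^sup>2 / real m1) = exp (- real m1 / 18)"
    using assms by (simp add: power2_eq_square field_simps)
  have sub: "UNIV - {x. real m1 \<le> 3 * real x} \<subseteq> {x. real x \<le> real m1 * (1/2) - real m1 / 6}"
    by auto
  have "measure ?M {x. real m1 \<le> 3 * real x} = 1 - measure ?M (UNIV - {x. real m1 \<le> 3 * real x})"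
    using measure_pmf.prob_compl[of "{x. real m1 \<le> 3 * real x}" ?M] by simp
  moreover have "measure ?M (UNIV - {x. real m1 \<le> 3 * real x}) \<le> measure ?M {x. real x \<le> real m1 * (1/2) - real m1 / 6}"
    using sub by (intro measure_pmf.finite_measure_mono) auto
  ultimately show ?thesis using le ex by linarith
qed

lemma goodw_iter:
  fixes ov :: "nat \<Rightarrow> real^'d"
  assumes orth: "orthn ov" and val: "valid ov S1" and d3: "CARD('d) \<ge> 3"
    and ai: "a i = 1" and g0: "goodw ov (W0 i)" and eta: "eta \<ge> 0"
  shows "goodw ov (gd_iter k eta S1 a W0 t i)"
proof -
  let ?W = "gd_iter k eta S1 a W0 t"
  have st: "ov 1 \<bullet> ?W i \<ge> ov 1 \<bullet> W0 i \<and> (\<forall>j\<in>{2..CARD('d)}. ov j \<bullet> ?W i \<le> ov j \<bullet> W0 i)"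
    by (rule inv_struct) (rule orth val d3 ai g0 eta)+
  have "?W i \<bullet> ov 1 > 0" using st g0 unfolding goodw_def by (simp add: inner_commute)
  moreover have "?W i \<bullet> ov l < ?W i \<bullet> ov 1" if l: "l \<in> {3..CARD('d)}" for l
  proof -
    have "ov l \<bullet> ?W i \<le> ov l \<bullet> W0 i" using st l by auto
    moreover have "W0 i \<bullet> ov l < W0 i \<bullet> ov 1" using g0 l unfolding goodw_def by auto
    ultimately show ?thesis using st by (simp add: inner_commute)
  qed
  ultimately show ?thesis unfolding goodw_def by auto
qed

lemma det:
  fixes ov :: "nat \<Rightarrow> real^'d"
  assumes d3: "CARD('d) \<ge> 3" and orth: "orthn ov" and val: "valid ov S1" and L: "length S1 > 0"
    and cnt: "real (length S1) \<le> 3 * real (length (filter (\<lambda>z. snd z = 1) S1))"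
    and eta: "eta1 \<le> 1 / (4 * real k * (real T1 + 1))"
    and r: "0 < r" "r \<le> eta1 / 200"
    and nW: "\<forall>i\<in>{1..k}. norm (W0 i) = r" and a0: "\<forall>i\<in>{1..k}. a0 i \<in> {1, -1}"
    and t: "t \<le> T1" and i: "i \<in> {1..k}" and wp: "in_W0plus ov (W0 i)" and ai: "a0 i = 1"
  shows "ov 1 \<bullet> gd_iter k eta1 S1 a0 W0 t i \<ge> real t * eta1 / 9
      \<and> (\<forall>j\<in>{1..CARD('d)}. j \<noteq> 1 \<longrightarrow> ov j \<bullet> gd_iter k eta1 S1 a0 W0 t i \<le> r)
      \<and> (\<forall>x. (x, 1) \<in> set S1 \<longrightarrow> patch (gd_iter k eta1 S1 a0 W0 t i) x = ov 1)"
proof -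
  have etapos: "eta1 > 0" using r by simp
  have kpos: "k > 0"
  proof (rule ccontr)
    assume "\<not> k > 0" then have "k = 0" by simp
    then show False using eta etapos by simp
  qed
  have keta: "real k * (real T1 + 1) * eta1 \<le> 1/4"
  proof -
    have pos: "4 * real k * (real T1 + 1) > 0" using kpos by simp
    have "eta1 * (4 * real k * (real T1 + 1)) \<le> 1" using eta pos by (simp add: le_divide_eq)
    then show ?thesis by (simp add: algebra_simps)
  qed
  have g0: "goodw ov (W0 i)" using wp unfolding goodw_def in_W0plus_def by blast
  have n0: "\<forall>i\<in>{1..k}. norm (W0 i) \<le> r" using nW by simp
  have reta: "r \<le> eta1" using r etapos by simp
  have cardeq: "card {q \<in> {..<length S1}. snd (S1!q) = 1} = length (filter (\<lambda>z. snd z = 1) S1)"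
    by (simp add: length_filter_conv_card)
  have cnt': "real (length S1) \<le> 3 * real (card {q \<in> {..<length S1}. snd (S1!q) = 1})"
    using cnt cardeq by simp
  have q: "ov 1 \<bullet> gd_iter k eta1 S1 a0 W0 t i \<ge> ov 1 \<bullet> W0 i + real t * eta1 / 9"
    by (rule quant[OF orth val d3 ai g0 a0 n0 less_imp_le[OF etapos] reta keta L cnt' t])
  have "ov 1 \<bullet> W0 i > 0" using g0 unfolding goodw_def by (simp add: inner_commute)
  with q have c1: "ov 1 \<bullet> gd_iter k eta1 S1 a0 W0 t i \<ge> real t * eta1 / 9" by linarith
  have st: "ov 1 \<bullet> gd_iter k eta1 S1 a0 W0 t i \<ge> ov 1 \<bullet> W0 i \<and>
     (\<forall>j\<in>{2..CARD('d)}. ov j \<bullet> gd_iter k eta1 S1 a0 W0 t i \<le> ov j \<bullet> W0 i)"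
    by (rule inv_struct) (rule orth val d3 ai g0 less_imp_le[OF etapos])+
  have c2: "ov j \<bullet> gd_iter k eta1 S1 a0 W0 t i \<le> r" if j: "j \<in> {1..CARD('d)}" "j \<noteq> 1" for j
  proof -
    have j2: "j \<in> {2..CARD('d)}" using j by auto
    have "ov j \<bullet> W0 i \<le> norm (ov j) * norm (W0 i)" by (rule norm_cauchy_schwarz)
    also have "\<dots> = r" using orth_norm[OF orth j(1)] nW i by simp
    finally show ?thesis using st j2 by fastforce
  qed
  have gw: "goodw ov (gd_iter k eta1 S1 a0 W0 t i)"
    by (rule goodw_iter) (rule orth val d3 ai g0 less_imp_le[OF etapos])+
  have c3: "patch (gd_iter k eta1 S1 a0 W0 t i) x = ov 1" if x: "(x, 1) \<in> set S1" for x
    using patch_good[OF gw val x] by simp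
  show ?thesis using c1 c2 c3 by blast
qed

lemma dist_valid:
  fixes ov :: "nat \<Rightarrow> real^'d"
  assumes d3: "CARD('d) \<ge> 3" and n1: "n \<ge> 1" and S: "\<forall>z\<in>set S1. z \<in> set_pmf (data_dist n ov)"
  shows "valid ov S1"
  unfolding valid_def
proof
  fix z assume "z \<in> set S1"
  then have zD: "z \<in> set_pmf (data_dist n ov)" using S by blast
  have ne1: "{0..<n} \<noteq> {}" using n1 by simp
  have ne2: "{3..CARD('d)} \<noteq> {}" using d3 by simp
  have s1: "set_pmf (pmf_of_set {1,-1::real}) = {1,-1}" by (rule set_pmf_of_set) auto
  have ex: "\<exists>y\<in>{1, -1::real}. \<exists>jp\<in>{0..<n}. \<exists>ids\<in>{xs \<in> lists {3..CARD('d)}. length xs = n}.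
      z = (map (\<lambda>j. if j = jp then ov (if y = 1 then 1 else 2) else ov (ids ! j)) [0..<n], y)"
    using zD unfolding data_dist_def set_bind_pmf set_return_pmf set_pmf_of_set[OF ne1 finite_atLeastLessThan]
      set_pmf_of_set[OF ne2 finite_atLeastAtMost] set_replicate_pmf s1
    by (simp only: UN_iff singleton_iff)
  from ex obtain y jp ids where y: "y \<in> {1, -1}" and jp: "jp < n" and ids: "ids \<in> lists {3..CARD('d)}"
    and lids: "length ids = n"
    and z: "z = (map (\<lambda>j. if j = jp then ov (if y = 1 then 1 else 2) else ov (ids ! j)) [0..<n], y)"
    by (simp only: mem_Collect_eq atLeastLessThan_iff Bex_def) blast
  have idsj: "ids ! j \<in> {3..CARD('d)}" if "j < n" for j
    using ids lids that by (metis in_listsD nth_mem)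
  show "snd z \<in> {1, - 1} \<and> fst z \<noteq> [] \<and>
       (snd z = 1 \<longrightarrow> ov 1 \<in> set (fst z) \<and> (\<forall>v\<in>set (fst z). \<exists>l\<in>{1} \<union> {3..CARD('d)}. v = ov l)) \<and>
       (snd z = - 1 \<longrightarrow> (\<forall>v\<in>set (fst z). \<exists>l\<in>{2..CARD('d)}. v = ov l))"
  proof (intro conjI impI ballI)
    show "snd z \<in> {1, -1}" using z y by simp
    show "fst z \<noteq> []" using z n1 by simp
  next
    assume "snd z = 1"
    then have y1: "y = 1" using z by simp
    show "ov 1 \<in> set (fst z)" using z y1 jp by (auto simp: image_iff intro!: bexI[of _ jp])
  next
    fix v assume "snd z = 1" "v \<in> set (fst z)"
    then have y1: "y = 1" and "v \<in> set (fst z)" using z by auto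
    then obtain j where j: "j < n" "v = (if j = jp then ov 1 else ov (ids ! j))" using z by auto
    show "\<exists>l\<in>{1} \<union> {3..CARD('d)}. v = ov l"
    proof (cases "j = jp")
      case True then show ?thesis using j by auto
    next
      case False then show ?thesis using j idsj[OF j(1)] by auto
    qed
  next
    fix v assume "snd z = -1" "v \<in> set (fst z)"
    then have y1: "y = -1" and "v \<in> set (fst z)" using z by auto
    then obtain j where j: "j < n" "v = (if j = jp then ov 2 else ov (ids ! j))" using z by auto
    show "\<exists>l\<in>{2..CARD('d)}. v = ov l"
    proof (cases "j = jp")
      case True then show ?thesis using j d3 by auto
    next
      case False then show ?thesis using j idsj[OF j(1)] by auto
    qed
  qed
qed

theorem lemma5p3:
  fixes ov :: "nat \<Rightarrow> real^'d" and n k m T1 :: nat and eta1 r :: real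
  assumes d3: "CARD('d) \<ge> 3"
    and n1: "n \<ge> 1"
    and orth: "\<forall>i\<in>{1..CARD('d)}. \<forall>j\<in>{1..CARD('d)}. ov i \<bullet> ov j = (if i = j then 1 else 0)"
    and eta: "eta1 \<le> 1 / (4 * real k * (real T1 + 1))"
    and r: "0 < r" "r \<le> eta1 / 200"
  shows "measure_pmf.prob (replicate_pmf m (data_dist n ov))
     {S. \<forall>W0 a0. (\<forall>i\<in>{1..k}. norm (W0 i) = r) \<longrightarrow> (\<forall>i\<in>{1..k}. a0 i \<in> {1, -1}) \<longrightarrow>
          (\<forall>t \<le> T1. \<forall>i\<in>{1..k}. in_W0plus ov (W0 i) \<and> a0 i = 1 \<longrightarrow>
             (let w = gd_iter k eta1 (first_half S) a0 W0 t i in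
                ov 1 \<bullet> w \<ge> real t * eta1 / 9
              \<and> (\<forall>j\<in>{1..CARD('d)}. j \<noteq> 1 \<longrightarrow> ov j \<bullet> w \<le> r)
              \<and> (\<forall>x. (x, 1) \<in> set (first_half S) \<longrightarrow> patch w x = ov 1)))}
     \<ge> 1 - 4 * exp (- real m / 36)"
  (is "measure_pmf.prob ?M ?E \<ge> _")
proof (cases "m = 0")
  case True
  have a: "0 \<le> measure_pmf.prob ?M ?E" by (rule measure_nonneg)
  have b: "1 - 4 * exp (- real m / 36) \<le> 0" using True by simp
  from a b show ?thesis by linarith
next
  case False
  then have m0: "m > 0" by simp
  define m1 where "m1 = nat \<lceil>real m / 2\<rceil>"
  have m1le: "m1 \<le> m" unfolding m1_def by linarith
  have m1pos: "m1 > 0" unfolding m1_def using m0 by linarith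
  have m1ge: "real m \<le> 2 * real m1" unfolding m1_def by linarith
  have orthn: "orthn ov" using orth unfolding orthn_def by blast
  define F where "F = (\<lambda>S :: 'd sample list. length (filter (\<lambda>z. snd z = (1::real)) (take m1 S)))"
  define G where "G = {S. real m1 \<le> 3 * real (F S)}"
  have incl: "S \<in> ?E" if S: "S \<in> set_pmf ?M" and SG: "S \<in> G" for S
  proof -
    have lS: "length S = m" and Sz: "\<forall>z\<in>set S. z \<in> set_pmf (data_dist n ov)"
      using S by (auto simp: set_replicate_pmf)
    have fh: "first_half S = take m1 S" unfolding first_half_def lS m1_def by simp
    let ?S1 = "take m1 S"
    have val: "valid ov ?S1" using dist_valid[OF d3 n1] Sz by (meson in_set_takeD)
    have L: "length ?S1 > 0" using lS m1le m1pos by simp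
    have lS1: "length ?S1 = m1" using lS m1le by simp
    have cnt: "real (length ?S1) \<le> 3 * real (length (filter (\<lambda>z. snd z = 1) ?S1))"
      using SG lS1 unfolding G_def F_def by simp
    show ?thesis unfolding mem_Collect_eq fh Let_def
    proof (intro allI impI ballI, elim conjE)
      fix W0 a0 t i
      assume nW: "\<forall>i\<in>{1..k}. norm (W0 i) = r" and a0: "\<forall>i\<in>{1..k}. a0 i \<in> {1, -1::real}"
        and t: "t \<le> T1" and i: "i \<in> {1..k}" and wp: "in_W0plus ov (W0 i)" and ai: "a0 i = 1"
      show "ov 1 \<bullet> gd_iter k eta1 ?S1 a0 W0 t i \<ge> real t * eta1 / 9
      \<and> (\<forall>j\<in>{1..CARD('d)}. j \<noteq> 1 \<longrightarrow> ov j \<bullet> gd_iter k eta1 ?S1 a0 W0 t i \<le> r)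
      \<and> (\<forall>x. (x, 1) \<in> set ?S1 \<longrightarrow> patch (gd_iter k eta1 ?S1 a0 W0 t i) x = ov 1)"
        by (rule det[OF d3 orthn val L cnt eta r nW a0 t i wp ai])
    qed
  qed
  have "measure_pmf.prob ?M G \<le> measure_pmf.prob ?M ?E"
  proof (rule measure_pmf.finite_measure_mono_AE)
    show "AE S in ?M. S \<in> G \<longrightarrow> S \<in> ?E"
      unfolding AE_measure_pmf_iff by (intro ballI impI incl)
  qed simp
  moreover have "measure_pmf.prob ?M G = measure (binomial_pmf m1 (1/2)) {x. real m1 \<le> 3 * real x}"
  proof -
    have "measure (binomial_pmf m1 (1/2)) {x. real m1 \<le> 3 * real x} =
          measure (map_pmf F ?M) {x. real m1 \<le> 3 * real x}"
      unfolding F_def by (simp only: count_dist[OF m1le])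
    also have "\<dots> = measure_pmf.prob ?M G" unfolding G_def by (simp add: vimage_def)
    finally show ?thesis by simp
  qed
  moreover have "measure (binomial_pmf m1 (1/2)) {x. real m1 \<le> 3 * real x} \<ge> 1 - exp (- real m1 / 18)"
    by (rule tail[OF m1pos])
  moreover have "exp (- real m1 / 18) \<le> exp (- real m / 36)" using m1ge by simp
  moreover have "exp (- real m / 36) \<ge> 0" by simp
  ultimately show ?thesis by linarith
qed

end
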